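(* Let $\mathbf P=(P,\leq,{}',0,1)$ be an orthogonal lub-complete poset. Then the following conditions are equivalent: (i) $\mathbf P$ is an orthocomplemented poset. (ii) For all $x,y\in P$, $x\leq y$ implies $x\rightarrow_K y=1$. (iii) For all $x,y\in P$, $x\leq y$ implies $x\rightarrow_N y=1$.
   Context: $(P,\leq,{}',0,1)$ is a bounded poset with an antitone involution ${}'$; orthogonal means $x\leq y'$ implies $x\vee y$ exists; lub-complete means for every lower bound $x$ of a finite subset $M$ there is a maximal lower bound of $M$ above $x$; orthocomplemented means $x\vee x'=1$ for all $x$. For $A\subseteq P$, $L(A)$, $U(A)$ are the lower and upper cones, $\mathrm{Max}\,A$, $\mathrm{Min}\,A$ the sets of maximal and minimal elements; joins/meets with sets are elementwise. Kalmbach implication: $x\rightarrow_K y:=\mathrm{Max}\,L(x',y)\vee \mathrm{Max}\,L(x',y')\vee (x\wedge \mathrm{Min}\,U(x',y))$; non-tolens implication: $x\rightarrow_N y:=y'\rightarrow_K x'$. "$=1$" means equal to $\{1\}$. *)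

theory Defs
  imports Main
begin

definition bounded_poset_inv ::
  "('a \<Rightarrow> 'a \<Rightarrow> bool) \<Rightarrow> ('a \<Rightarrow> 'a) \<Rightarrow> 'a \<Rightarrow> 'a \<Rightarrow> bool" where
  "bounded_poset_inv le c zer one \<longleftrightarrow>
     (\<forall>x. le x x) \<and> (\<forall>x y. le x y \<and> le y x \<longrightarrow> x = y) \<and>
     (\<forall>x y w. le x y \<and> le y w \<longrightarrow> le x w) \<and>
     (\<forall>x. le zer x \<and> le x one) \<and>
     (\<forall>x y. le x y \<longrightarrow> le (c y) (c x)) \<and> (\<forall>x. c (c x) = x)"

definition is_lub :: "('a \<Rightarrow> 'a \<Rightarrow> bool) \<Rightarrow> 'a \<Rightarrow> 'a \<Rightarrow> 'a \<Rightarrow> bool" where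
  "is_lub le s x y \<longleftrightarrow> le x s \<and> le y s \<and> (\<forall>u. le x u \<and> le y u \<longrightarrow> le s u)"

definition is_glb :: "('a \<Rightarrow> 'a \<Rightarrow> bool) \<Rightarrow> 'a \<Rightarrow> 'a \<Rightarrow> 'a \<Rightarrow> bool" where
  "is_glb le m x y \<longleftrightarrow> le m x \<and> le m y \<and> (\<forall>u. le u x \<and> le u y \<longrightarrow> le u m)"

definition LC :: "('a \<Rightarrow> 'a \<Rightarrow> bool) \<Rightarrow> 'a set \<Rightarrow> 'a set" where
  "LC le A = {x. \<forall>a\<in>A. le x a}"

definition UC :: "('a \<Rightarrow> 'a \<Rightarrow> bool) \<Rightarrow> 'a set \<Rightarrow> 'a set" where
  "UC le A = {x. \<forall>a\<in>A. le a x}"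

definition MaxS :: "('a \<Rightarrow> 'a \<Rightarrow> bool) \<Rightarrow> 'a set \<Rightarrow> 'a set" where
  "MaxS le A = {a\<in>A. \<forall>b\<in>A. le a b \<longrightarrow> b = a}"

definition MinS :: "('a \<Rightarrow> 'a \<Rightarrow> bool) \<Rightarrow> 'a set \<Rightarrow> 'a set" where
  "MinS le A = {a\<in>A. \<forall>b\<in>A. le b a \<longrightarrow> b = a}"

definition orthogonal :: "('a \<Rightarrow> 'a \<Rightarrow> bool) \<Rightarrow> ('a \<Rightarrow> 'a) \<Rightarrow> bool" where
  "orthogonal le c \<longleftrightarrow> (\<forall>x y. le x (c y) \<longrightarrow> (\<exists>s. is_lub le s x y))"

definition lub_complete :: "('a \<Rightarrow> 'a \<Rightarrow> bool) \<Rightarrow> bool" where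
  "lub_complete le \<longleftrightarrow>
     (\<forall>M x. finite M \<and> x \<in> LC le M \<longrightarrow> (\<exists>m\<in>MaxS le (LC le M). le x m))"

definition orthocomplemented :: "('a \<Rightarrow> 'a \<Rightarrow> bool) \<Rightarrow> ('a \<Rightarrow> 'a) \<Rightarrow> 'a \<Rightarrow> bool" where
  "orthocomplemented le c one \<longleftrightarrow> (\<forall>x. is_lub le one x (c x))"

definition set_join :: "('a \<Rightarrow> 'a \<Rightarrow> bool) \<Rightarrow> 'a set \<Rightarrow> 'a set \<Rightarrow> 'a set" where
  "set_join le A B = {s. \<exists>a\<in>A. \<exists>b\<in>B. is_lub le s a b}"

definition set_meet :: "('a \<Rightarrow> 'a \<Rightarrow> bool) \<Rightarrow> 'a set \<Rightarrow> 'a set \<Rightarrow> 'a set" where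
  "set_meet le A B = {m. \<exists>a\<in>A. \<exists>b\<in>B. is_glb le m a b}"

definition impl_K :: "('a \<Rightarrow> 'a \<Rightarrow> bool) \<Rightarrow> ('a \<Rightarrow> 'a) \<Rightarrow> 'a \<Rightarrow> 'a \<Rightarrow> 'a set" where
  "impl_K le c x y =
     set_join le
       (set_join le (MaxS le (LC le {c x, y})) (MaxS le (LC le {c x, c y})))
       (set_meet le {x} (MinS le (UC le {c x, y})))"

definition impl_N :: "('a \<Rightarrow> 'a \<Rightarrow> bool) \<Rightarrow> ('a \<Rightarrow> 'a) \<Rightarrow> 'a \<Rightarrow> 'a \<Rightarrow> 'a set" where
  "impl_N le c x y = impl_K le c (c y) (c x)"

end

theory Submission
  imports Defs
begin

locale bp =
  fixes le :: "'a \<Rightarrow> 'a \<Rightarrow> bool" and c :: "'a \<Rightarrow> 'a" and zer one :: 'a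
  assumes bp: "bounded_poset_inv le c zer one"
begin

lemma refl: "le x x" using bp unfolding bounded_poset_inv_def by blast
lemma antisym: "le x y \<Longrightarrow> le y x \<Longrightarrow> x = y" using bp unfolding bounded_poset_inv_def by blast
lemma trans: "le x y \<Longrightarrow> le y w \<Longrightarrow> le x w" using bp unfolding bounded_poset_inv_def by blast
lemma zer: "le zer x" using bp unfolding bounded_poset_inv_def by blast
lemma one: "le x one" using bp unfolding bounded_poset_inv_def by blast
lemma anti: "le x y \<Longrightarrow> le (c y) (c x)" using bp unfolding bounded_poset_inv_def by blast
lemma inv[simp]: "c (c x) = x" using bp unfolding bounded_poset_inv_def by blast

lemma anti_iff: "le (c y) (c x) \<longleftrightarrow> le x y"
  by (metis anti inv)

lemma le_c: "le x (c y) \<longleftrightarrow> le y (c x)"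
  by (metis anti inv)

lemma c_one: "c one = zer"
  by (metis anti antisym inv one zer)
lemma c_zer: "c zer = one"
  by (metis c_one inv)

lemma lub_unique: "is_lub le s a b \<Longrightarrow> is_lub le t a b \<Longrightarrow> s = t"
  unfolding is_lub_def by (metis antisym)

lemma glb_unique: "is_glb le s a b \<Longrightarrow> is_glb le t a b \<Longrightarrow> s = t"
  unfolding is_glb_def by (metis antisym)

lemma lub_le: "le a b \<Longrightarrow> is_lub le b a b"
  unfolding is_lub_def by (metis refl)

lemma glb_le: "le a b \<Longrightarrow> is_glb le a a b"
  unfolding is_glb_def by (metis refl)

lemma lub_sym: "is_lub le s a b \<Longrightarrow> is_lub le s b a"
  unfolding is_lub_def by blast

lemma MinU_ne:
  assumes lc: "lub_complete le"
  shows "\<exists>t. t \<in> MinS le (UC le {c x, y})"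
proof -
  have "zer \<in> LC le {x, c y}" unfolding LC_def using zer by auto
  then obtain m where m: "m \<in> MaxS le (LC le {x, c y})"
    using lc unfolding lub_complete_def by blast
  have "c m \<in> MinS le (UC le {c x, y})"
  proof -
    have m1: "le m x" "le m (c y)" "\<And>b. le b x \<Longrightarrow> le b (c y) \<Longrightarrow> le m b \<Longrightarrow> b = m"
      using m unfolding MaxS_def LC_def by auto
    have "c m \<in> UC le {c x, y}" unfolding UC_def using m1 anti_iff le_c by auto
    moreover have "b = c m" if "b \<in> UC le {c x, y}" "le b (c m)" for b
    proof -
      have "le (c x) b" "le y b" using that unfolding UC_def by auto
      then have "le (c b) x" "le (c b) (c y)" using anti_iff le_c by (metis inv)+
      moreover have "le m (c b)" using that(2) le_c by (metis inv)
      ultimately have "c b = m" using m1(3) by blast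
      then show ?thesis by (metis inv)
    qed
    ultimately show ?thesis unfolding MinS_def by blast
  qed
  then show ?thesis by blast
qed

lemma MaxB:
  assumes "le x y"
  shows "MaxS le (LC le {c x, c y}) = {c y}"
proof -
  have cy: "c y \<in> LC le {c x, c y}" unfolding LC_def using anti assms refl by auto
  have "c y \<in> MaxS le (LC le {c x, c y})"
    unfolding MaxS_def using cy by (auto simp: LC_def intro: antisym)
  moreover have "b = c y" if "b \<in> MaxS le (LC le {c x, c y})" for b
    using that cy unfolding MaxS_def LC_def by auto
  ultimately show ?thesis by blast
qed

lemma dir1:
  assumes oc: "orthocomplemented le c one" and og: "orthogonal le c"
    and lc: "lub_complete le" and xy: "le x y"
  shows "impl_K le c x y = {one}"
proof -
  have ocl: "is_lub le one a (c a)" for a using oc unfolding orthocomplemented_def by blast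
  have bot: "v = zer" if "le v a" "le v (c a)" for v a
  proof -
    have "le (c a) (c v)" "le a (c v)" using that anti_iff le_c by (metis inv)+
    then have "le one (c v)" using ocl[of a] unfolding is_lub_def by blast
    then have "c v = one" using one antisym by blast
    then show ?thesis using c_one by (metis inv)
  qed
  define A where "A = MaxS le (LC le {c x, y})"
  define C where "C = MinS le (UC le {c x, y})"
  have key: "r = one" if a: "a \<in> A" and s: "is_lub le s a (c y)" and t: "t \<in> C"
      and q: "is_glb le q x t" and r: "is_lub le r s q" for a s t q r
  proof -
    have "le y t" using t unfolding C_def MinS_def UC_def by auto
    then have "is_glb le x x t" using glb_le trans xy by blast
    then have qx: "q = x" using q glb_unique by blast
    have a1: "le a (c x)" "le a y" "\<And>b. le b (c x) \<Longrightarrow> le b y \<Longrightarrow> le a b \<Longrightarrow> b = a"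
      using a unfolding A_def MaxS_def LC_def by auto
    have ru: "le s r" "le x r" using r qx unfolding is_lub_def by auto
    have sa: "le a s" "le (c y) s" using s unfolding is_lub_def by auto
    have ar: "le a r" "le (c y) r" using sa ru trans by blast+
    have cr: "le (c r) (c x)" "le (c r) y" "le (c r) (c a)"
      using ru ar anti_iff le_c by (metis inv)+
    obtain w where w: "is_lub le w a (c r)"
      using og ar(1) unfolding orthogonal_def by (metis inv)
    have "le w (c x)" "le w y" using w a1 cr unfolding is_lub_def by auto
    moreover have "le a w" using w unfolding is_lub_def by auto
    ultimately have "w = a" using a1(3) by blast
    then have "le (c r) a" using w unfolding is_lub_def by auto
    then have "c r = zer" using bot cr(3) by blast
    then show ?thesis using c_zer by (metis inv)
  qed
  have sub: "impl_K le c x y \<subseteq> {one}"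
  proof
    fix r assume "r \<in> impl_K le c x y"
    then obtain a s t q where "a \<in> A" "is_lub le s a (c y)" "t \<in> C" "is_glb le q x t"
      "is_lub le r s q"
      unfolding impl_K_def set_join_def set_meet_def MaxB[OF xy] A_def C_def by blast
    then show "r \<in> {one}" using key by blast
  qed
  have "zer \<in> LC le {c x, y}" unfolding LC_def using zer by auto
  then obtain a where a: "a \<in> A" using lc unfolding lub_complete_def A_def by blast
  then have a1: "le a (c x)" "le a y" unfolding A_def MaxS_def LC_def by auto
  obtain s where s: "is_lub le s a (c y)"
    using og a1(2) unfolding orthogonal_def by (metis inv)
  obtain t where t: "t \<in> C" using MinU_ne[OF lc] C_def by blast
  have "le y t" using t unfolding C_def MinS_def UC_def by auto
  then have q: "is_glb le x x t" using glb_le trans xy by blast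
  have "le (c y) (c x)" using anti xy by blast
  then have "le s (c x)" using s a1 unfolding is_lub_def by blast
  then obtain r where r: "is_lub le r s x"
    using og unfolding orthogonal_def by (metis le_c)
  have "r = one" using key[OF a s t q r] .
  then have "one \<in> impl_K le c x y"
    unfolding impl_K_def set_join_def set_meet_def MaxB[OF xy]
    using a s t q r unfolding A_def C_def by blast
  then show ?thesis using sub by blast
qed

lemma dir2:
  assumes h: "\<forall>x y. le x y \<longrightarrow> impl_K le c x y = {one}"
  shows "orthocomplemented le c one"
  unfolding orthocomplemented_def
proof
  fix x
  have "one \<in> impl_K le c x x" using h refl by blast
  then obtain a s b t q where a: "a \<in> MaxS le (LC le {c x, x})"
    and b: "b \<in> MaxS le (LC le {c x, c x})" and s: "is_lub le s a b"
    and t: "t \<in> MinS le (UC le {c x, x})" and q: "is_glb le q x t"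
    and r: "is_lub le one s q"
    unfolding impl_K_def set_join_def set_meet_def by blast
  have "b = c x" using MaxB[OF refl[of x]] b by simp
  moreover have "le a (c x)" using a unfolding MaxS_def LC_def by auto
  ultimately have "s = c x" using s lub_le lub_unique by blast
  moreover have "le x t" using t unfolding MinS_def UC_def by auto
  then have "q = x" using q glb_le glb_unique by blast
  ultimately show "is_lub le one x (c x)" using r lub_sym by blast
qed

end

theorem theorem4:
  fixes le :: "'a \<Rightarrow> 'a \<Rightarrow> bool" and c :: "'a \<Rightarrow> 'a" and zer one :: 'a
  assumes "bounded_poset_inv le c zer one"
    and "orthogonal le c"
    and "lub_complete le"
  shows "(orthocomplemented le c one \<longleftrightarrow> (\<forall>x y. le x y \<longrightarrow> impl_K le c x y = {one}))
       \<and> (orthocomplemented le c one \<longleftrightarrow> (\<forall>x y. le x y \<longrightarrow> impl_N le c x y = {one}))"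
proof -
  interpret bp le c zer one using assms(1) by (unfold_locales)
  have K: "orthocomplemented le c one \<longleftrightarrow> (\<forall>x y. le x y \<longrightarrow> impl_K le c x y = {one})"
    using dir1[OF _ assms(2,3)] dir2 by blast
  have "(\<forall>x y. le x y \<longrightarrow> impl_N le c x y = {one}) \<longleftrightarrow> (\<forall>x y. le x y \<longrightarrow> impl_K le c x y = {one})"
    unfolding impl_N_def by (metis anti_iff inv)
  with K show ?thesis by blast
qed

end
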